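(* Let $p$ be a prime, let $$\Gamma = \left\{ \begin{pmatrix}1&x_{12}&x_{13}&x_{14}\\ 0 &p^k&x_{23}&x_{24}\\0&0&p^n&x_{34}\\0&0&0&1 \end{pmatrix} : x_{ij}\in \mathbb Z[1/p], \ k, n\in \mathbb Z\right\}$$ (Abels's group) and let $N\le\Gamma$ be the central subgroup of matrices of the form $I+xE_{14}$ with $x\in\mathbb Z$ (identity matrix with $x$ in the $(1,4)$ entry). Then the amalgamated free product $\Gamma \ast_{N=N} \Gamma$ is not maximally almost periodic.
   Context: A group is maximally almost periodic (MAP) if its finite-dimensional unitary representations separate its points. $\Gamma\ast_{N=N}\Gamma$ denotes the free product of two copies of $\Gamma$ amalgamated along the identity map of $N$. *)

theory Defs
  imports "Jordan_Normal_Form.Matrix" "HOL-Algebra.Group"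
begin

definition conj_transpose :: "complex mat \<Rightarrow> complex mat" where
  "conj_transpose A = mat (dim_col A) (dim_row A) (\<lambda>(i,j). cnj (A $$ (j,i)))"

definition unitary_group :: "nat \<Rightarrow> complex mat monoid" where
  "unitary_group n =
     \<lparr> carrier = {A. A \<in> carrier_mat n n \<and> A * conj_transpose A = 1\<^sub>m n},
       mult = (\<lambda>A B. A * B),
       one = 1\<^sub>m n \<rparr>"

definition MAP :: "('a, 'b) monoid_scheme \<Rightarrow> bool" where
  "MAP G \<longleftrightarrow> (\<forall>g \<in> carrier G. \<forall>h \<in> carrier G. g \<noteq> h \<longrightarrow>
      (\<exists>n \<rho>. \<rho> \<in> hom G (unitary_group n) \<and> \<rho> g \<noteq> \<rho> h))"

text \<open>Words are lists of letters (b, g) with g in the group and b selecting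
  the copy (False = first copy, True = second copy).\<close>

inductive amalg_eq :: "('a, 'b) monoid_scheme \<Rightarrow> 'a set \<Rightarrow> (bool \<times> 'a) list \<Rightarrow> (bool \<times> 'a) list \<Rightarrow> bool"
  for G :: "('a, 'b) monoid_scheme" and H :: "'a set" where
  refl: "amalg_eq G H w w"
| sym: "amalg_eq G H v w \<Longrightarrow> amalg_eq G H w v"
| trans: "amalg_eq G H u v \<Longrightarrow> amalg_eq G H v w \<Longrightarrow> amalg_eq G H u w"
| merge: "x \<in> carrier G \<Longrightarrow> y \<in> carrier G \<Longrightarrow> amalg_eq G H (u @ [(b, x), (b, y)] @ v) (u @ [(b, x \<otimes>\<^bsub>G\<^esub> y)] @ v)"
| unit: "amalg_eq G H (u @ [(b, \<one>\<^bsub>G\<^esub>)] @ v) (u @ v)"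
| ident: "h \<in> H \<Longrightarrow> amalg_eq G H (u @ [(False, h)] @ v) (u @ [(True, h)] @ v)"

definition amalg_words :: "('a, 'b) monoid_scheme \<Rightarrow> (bool \<times> 'a) list set" where
  "amalg_words G = {w. \<forall>l \<in> set w. snd l \<in> carrier G}"

definition amalg_class :: "('a, 'b) monoid_scheme \<Rightarrow> 'a set \<Rightarrow> (bool \<times> 'a) list \<Rightarrow> (bool \<times> 'a) list set" where
  "amalg_class G H w = {v \<in> amalg_words G. amalg_eq G H w v}"

definition amalg_product :: "('a, 'b) monoid_scheme \<Rightarrow> 'a set \<Rightarrow> (bool \<times> 'a) list set monoid" where
  "amalg_product G H =
     \<lparr> carrier = amalg_class G H ` amalg_words G,
       mult = (\<lambda>X Y. amalg_class G H ((SOME x. x \<in> X) @ (SOME y. y \<in> Y))),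
       one = amalg_class G H [] \<rparr>"

definition Zinvp :: "nat \<Rightarrow> rat set" where
  "Zinvp p = {q. \<exists>a::int. \<exists>m::nat. q = of_int a / of_nat p ^ m}"

definition abels_group :: "nat \<Rightarrow> rat mat monoid" where
  "abels_group p =
     \<lparr> carrier = {A. A \<in> carrier_mat 4 4 \<and>
          (\<exists>k n :: int. A $$ (0,0) = 1 \<and> A $$ (1,1) = of_nat p powi k \<and>
                        A $$ (2,2) = of_nat p powi n \<and> A $$ (3,3) = 1) \<and>
          (\<forall>i<4. \<forall>j<4. j < i \<longrightarrow> A $$ (i,j) = 0) \<and>
          (\<forall>i<4. \<forall>j<4. i < j \<longrightarrow> A $$ (i,j) \<in> Zinvp p)},
       mult = (\<lambda>A B. A * B),
       one = 1\<^sub>m 4 \<rparr>"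

text \<open>The central subgroup N = {I + x E_14 : x in Z} (0-based index (0,3)).\<close>

definition abels_N :: "rat mat set" where
  "abels_N = {1\<^sub>m 4 + mat 4 4 (\<lambda>(i,j). if (i,j) = (0,3) then of_int x else 0) | x :: int. True}"

end

theory Submission
  imports Defs "Jordan_Normal_Form.Schur_Decomposition" "Jordan_Normal_Form.Spectral_Radius"
    "Jordan_Normal_Form.Jordan_Normal_Form_Uniqueness" "HOL-Number_Theory.Cong"
begin


lemma ct_carrier[simp]: "A \<in> carrier_mat n m \<Longrightarrow> conj_transpose A \<in> carrier_mat m n"
  unfolding conj_transpose_def by auto

lemma ct_dims[simp]: "dim_row (conj_transpose A) = dim_col A" "dim_col (conj_transpose A) = dim_row A"
  unfolding conj_transpose_def by auto

lemma ct_index[simp]: "i < dim_col A \<Longrightarrow> j < dim_row A \<Longrightarrow> conj_transpose A $$ (i,j) = cnj (A $$ (j,i))"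
  unfolding conj_transpose_def by auto

lemma ct_mult: assumes "A \<in> carrier_mat n m" "B \<in> carrier_mat m k"
  shows "conj_transpose (A * B) = conj_transpose B * conj_transpose A"
proof (rule eq_matI)
  fix i j assume ij: "i < dim_row (conj_transpose B * conj_transpose A)" "j < dim_col (conj_transpose B * conj_transpose A)"
  hence i: "i < k" and j: "j < n" using assms by auto
  have "conj_transpose (A * B) $$ (i, j) = cnj (\<Sum>l<m. A $$ (j,l) * B $$ (l,i))"
    using assms i j by (simp add: scalar_prod_def atLeast0LessThan)
  also have "\<dots> = (\<Sum>l<m. cnj (B $$ (l,i)) * cnj (A $$ (j,l)))"
    by (simp add: mult.commute)
  also have "\<dots> = (conj_transpose B * conj_transpose A) $$ (i,j)"
    using assms i j by (simp add: scalar_prod_def atLeast0LessThan)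
  finally show "conj_transpose (A * B) $$ (i, j) = (conj_transpose B * conj_transpose A) $$ (i,j)" .
qed (use assms in auto)

lemma ct_minus: assumes "A \<in> carrier_mat n m" "B \<in> carrier_mat n m"
  shows "conj_transpose (A - B) = conj_transpose A - conj_transpose B"
  by (rule eq_matI) (use assms in auto)

lemma ct_zero[simp]: "conj_transpose (0\<^sub>m n m) = 0\<^sub>m m n"
  by (rule eq_matI) auto

lemma ct_one[simp]: "conj_transpose (1\<^sub>m n) = 1\<^sub>m n"
  by (rule eq_matI) auto

lemma unitary_left: assumes "A \<in> carrier_mat n n" "A * conj_transpose A = 1\<^sub>m n"
  shows "conj_transpose A * A = 1\<^sub>m n"
  using mat_mult_left_right_inverse[OF assms(1) _ assms(2)] assms(1) by simp

lemma gram_zero: assumes "Y \<in> carrier_mat n m" "conj_transpose Y * Y = 0\<^sub>m m m"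
  shows "Y = 0\<^sub>m n m"
proof (rule eq_matI)
  fix i j assume "i < dim_row (0\<^sub>m n m)" "j < dim_col (0\<^sub>m n m)"
  hence i: "i < n" and j: "j < m" by auto
  have "(conj_transpose Y * Y) $$ (j,j) = 0" using assms(2) j by simp
  hence "(\<Sum>l<n. cnj (Y $$ (l,j)) * Y $$ (l,j)) = 0"
    using assms(1) j by (simp add: scalar_prod_def atLeast0LessThan)
  hence "(\<Sum>l<n. complex_of_real ((cmod (Y $$ (l,j)))\<^sup>2)) = 0"
    by (simp only: complex_norm_square mult.commute)
  hence "(\<Sum>l<n. (cmod (Y $$ (l,j)))\<^sup>2) = 0"
    by (metis of_real_eq_0_iff of_real_sum)
  hence "\<forall>l\<in>{..<n}. (cmod (Y $$ (l,j)))\<^sup>2 = 0"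
    by (subst sum_nonneg_eq_0_iff[symmetric]) auto
  with i show "Y $$ (i,j) = 0\<^sub>m n m $$ (i,j)" using j by simp
qed (use assms in auto)


lemma ct_ct[simp]: "conj_transpose (conj_transpose A) = A"
  by (rule eq_matI) auto

lemma minus_zero_eq: fixes A C :: "complex mat" assumes "A \<in> carrier_mat n m" "C \<in> carrier_mat n m" "A - C = 0\<^sub>m n m"
  shows "A = C"
proof (rule eq_matI)
  fix i j assume "i < dim_row C" "j < dim_col C"
  hence ij: "i < n" "j < m" using assms by auto
  show "A $$ (i,j) = C $$ (i,j)"
  proof -
    have e1: "(A - C) $$ (i,j) = A $$ (i,j) - C $$ (i,j)" using assms(1,2) ij by simp
    have e2: "(A - C) $$ (i,j) = 0" using ij by (subst assms(3)) simp
    from e1 e2 show ?thesis by simp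
  qed
qed (use assms in auto)

lemma kernel_step: assumes B: "B \<in> carrier_mat n n" and U: "B * conj_transpose B = 1\<^sub>m n"
  and X: "X \<in> carrier_mat n n" and Z: "X * (B - 1\<^sub>m n) * (B - 1\<^sub>m n) = 0\<^sub>m n n"
  shows "X * (B - 1\<^sub>m n) = 0\<^sub>m n n"
proof -
  define M where "M = B - 1\<^sub>m n"
  define Y where "Y = X * M"
  have I: "1\<^sub>m n \<in> carrier_mat n n" by simp
  have M: "M \<in> carrier_mat n n" unfolding M_def using B by auto
  have Y: "Y \<in> carrier_mat n n" unfolding Y_def using X M by auto
  have Bt: "conj_transpose B \<in> carrier_mat n n" using B by simp
  have "Y * M = 0\<^sub>m n n" using Z unfolding Y_def M_def .
  hence "Y * B - Y * 1\<^sub>m n = 0\<^sub>m n n" unfolding M_def mult_minus_distrib_mat[OF Y B I] .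
  hence "Y * B - Y = 0\<^sub>m n n" unfolding right_mult_one_mat[OF Y] .
  hence YB: "Y * B = Y" by (rule minus_zero_eq[of _ n n, rotated 2]) (use Y B in auto)
  have "Y * conj_transpose B = (Y * B) * conj_transpose B" using YB by simp
  also have "\<dots> = Y * (B * conj_transpose B)" by (rule assoc_mult_mat[OF Y B Bt])
  also have "\<dots> = Y" using Y U by simp
  finally have YBt: "Y * conj_transpose B = Y" .
  have Xt: "conj_transpose X \<in> carrier_mat n n" using X by simp
  have Mt: "conj_transpose M \<in> carrier_mat n n" using M by simp
  have "Y * conj_transpose Y = Y * (conj_transpose M * conj_transpose X)"
    unfolding Y_def using ct_mult[OF X M] by simp
  also have "\<dots> = (Y * conj_transpose M) * conj_transpose X" using assoc_mult_mat[OF Y Mt Xt] by simp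
  also have "conj_transpose M = conj_transpose B - 1\<^sub>m n" unfolding M_def using ct_minus[OF B I] by simp
  also have "Y * (conj_transpose B - 1\<^sub>m n) = Y * conj_transpose B - Y * 1\<^sub>m n"
    by (rule mult_minus_distrib_mat[OF Y Bt I])
  also have "\<dots> = 0\<^sub>m n n" unfolding YBt using Y by simp
  finally have "Y * conj_transpose Y = 0\<^sub>m n n" using left_mult_zero_mat[OF Xt] by simp
  hence "conj_transpose (conj_transpose Y) * conj_transpose Y = 0\<^sub>m n n" by simp
  from gram_zero[OF _ this] Y have "conj_transpose Y = 0\<^sub>m n n" by simp
  hence "conj_transpose (conj_transpose Y) = conj_transpose (0\<^sub>m n n)" by simp
  hence "Y = 0\<^sub>m n n" by simp
  thus ?thesis using Y_def M_def by simp
qed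

lemma unitary_unipotent: assumes B: "B \<in> carrier_mat n n" and U: "B * conj_transpose B = 1\<^sub>m n"
  and N: "(B - 1\<^sub>m n) ^\<^sub>m k = 0\<^sub>m n n"
  shows "B = 1\<^sub>m n"
proof (cases k)
  case 0
  show ?thesis
  proof (cases "n = 0")
    case True thus ?thesis using B by (intro eq_matI) auto
  next
    case False
    hence "(1\<^sub>m n :: complex mat) $$ (0,0) = 0\<^sub>m n n $$ (0,0)" using N 0 B by simp
    thus ?thesis using False by simp
  qed
next
  case (Suc j)
  define M where "M = B - 1\<^sub>m n"
  have M: "M \<in> carrier_mat n n" unfolding M_def using B by auto
  have "M ^\<^sub>m Suc j = 0\<^sub>m n n \<Longrightarrow> M = 0\<^sub>m n n" for j
  proof (induction j)
    case 0 thus ?case using M by simp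
  next
    case (Suc j)
    have Mj: "M ^\<^sub>m j \<in> carrier_mat n n" using M by simp
    have "M ^\<^sub>m j * (B - 1\<^sub>m n) * (B - 1\<^sub>m n) = 0\<^sub>m n n" using Suc.prems unfolding M_def by simp
    from kernel_step[OF B U Mj this] have "M ^\<^sub>m Suc j = 0\<^sub>m n n" unfolding M_def by simp
    thus ?case by (rule Suc.IH)
  qed
  hence "M = 0\<^sub>m n n" using N Suc unfolding M_def by simp
  thus ?thesis unfolding M_def by (rule minus_zero_eq[of _ n n, rotated 2]) (use B in auto)
qed

lemma ut_mult: fixes A B :: "complex mat"
  assumes A: "A \<in> carrier_mat n n" and B: "B \<in> carrier_mat n n"
  and uA: "upper_triangular A" and uB: "upper_triangular B"
  shows "upper_triangular (A * B) \<and> (\<forall>i<n. (A * B) $$ (i,i) = A $$ (i,i) * B $$ (i,i))"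
proof
  show "upper_triangular (A * B)"
  proof (rule upper_triangularI)
    fix i j assume ji: "j < i" and i: "i < dim_row (A * B)"
    hence i': "i < n" using A by simp
    have "(A * B) $$ (i,j) = (\<Sum>l<n. A $$ (i,l) * B $$ (l,j))"
      using A B i' ji by (simp add: scalar_prod_def atLeast0LessThan)
    also have "\<dots> = 0"
    proof (rule sum.neutral, intro ballI)
      fix l assume l: "l \<in> {..<n}"
      show "A $$ (i,l) * B $$ (l,j) = 0"
      proof (cases "l < i")
        case True thus ?thesis using uA A i' by (auto dest: upper_triangularD)
      next
        case False hence "j < l" using ji by simp
        thus ?thesis using uB B l by (auto dest: upper_triangularD)
      qed
    qed
    finally show "(A * B) $$ (i,j) = 0" .
  qed
  show "\<forall>i<n. (A * B) $$ (i,i) = A $$ (i,i) * B $$ (i,i)"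
  proof (intro allI impI)
    fix i assume i: "i < n"
    have "(A * B) $$ (i,i) = (\<Sum>l<n. A $$ (i,l) * B $$ (l,i))"
      using A B i by (simp add: scalar_prod_def atLeast0LessThan)
    also have "\<dots> = (\<Sum>l<n. if l = i then A $$ (i,i) * B $$ (i,i) else 0)"
    proof (rule sum.cong[OF HOL.refl])
      fix l assume l: "l \<in> {..<n}"
      show "A $$ (i,l) * B $$ (l,i) = (if l = i then A $$ (i,i) * B $$ (i,i) else 0)"
      proof (cases "l < i")
        case True thus ?thesis using uA A i by (auto dest: upper_triangularD)
      next
        case False
        show ?thesis
        proof (cases "l = i")
          case False with \<open>\<not> l < i\<close> have "i < l" by simp
          thus ?thesis using uB B l False by (auto dest: upper_triangularD)
        qed simp
      qed
    qed
    also have "\<dots> = A $$ (i,i) * B $$ (i,i)" using i by simp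
    finally show "(A * B) $$ (i,i) = A $$ (i,i) * B $$ (i,i)" .
  qed
qed

lemma ut_pow: fixes A :: "complex mat"
  assumes A: "A \<in> carrier_mat n n" and uA: "upper_triangular A"
  shows "upper_triangular (A ^\<^sub>m k) \<and> (\<forall>i<n. (A ^\<^sub>m k) $$ (i,i) = A $$ (i,i) ^ k)"
proof (induction k)
  case 0 thus ?case using A by simp
next
  case (Suc k)
  have Ak: "A ^\<^sub>m k \<in> carrier_mat n n" using A by simp
  from ut_mult[OF Ak A _ uA] Suc.IH show ?case by (simp add: mult.commute)
qed

lemma strict_nilp: fixes N :: "complex mat"
  assumes N: "N \<in> carrier_mat n n" and s: "\<And>i j. i < n \<Longrightarrow> j < n \<Longrightarrow> j \<le> i \<Longrightarrow> N $$ (i,j) = 0"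
  shows "N ^\<^sub>m n = 0\<^sub>m n n"
proof -
  have "\<forall>i<n. \<forall>j<n. j < i + k \<longrightarrow> (N ^\<^sub>m k) $$ (i,j) = 0" for k
  proof (induction k)
    case 0 thus ?case using N by simp
  next
    case (Suc k)
    show ?case
    proof (intro allI impI)
      fix i j assume i: "i < n" and j: "j < n" and jk: "j < i + Suc k"
      have Nk: "N ^\<^sub>m k \<in> carrier_mat n n" using N by simp
      have "(N ^\<^sub>m Suc k) $$ (i,j) = (\<Sum>l<n. (N ^\<^sub>m k) $$ (i,l) * N $$ (l,j))"
        using N Nk i j by (simp add: scalar_prod_def atLeast0LessThan)
      also have "\<dots> = 0"
      proof (rule sum.neutral, intro ballI)
        fix l assume l: "l \<in> {..<n}"
        show "(N ^\<^sub>m k) $$ (i,l) * N $$ (l,j) = 0"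
        proof (cases "l < i + k")
          case True thus ?thesis using Suc.IH i l by auto
        next
          case False thus ?thesis using s[of l j] l j jk by auto
        qed
      qed
      finally show "(N ^\<^sub>m Suc k) $$ (i,j) = 0" .
    qed
  qed
  hence "\<forall>i<n. \<forall>j<n. (N ^\<^sub>m n) $$ (i,j) = 0" by auto
  thus ?thesis using N by (intro eq_matI) auto
qed

lemma mult_zero_vec': fixes A :: "complex mat" shows "A \<in> carrier_mat m n \<Longrightarrow> A *\<^sub>v 0\<^sub>v n = 0\<^sub>v m"
  by (intro eq_vecI) (auto simp: scalar_prod_def)

lemma eig_step: fixes A S :: "complex mat"
  assumes A: "A \<in> carrier_mat n n" and UA: "A * conj_transpose A = 1\<^sub>m n"
  and S: "S \<in> carrier_mat n n" and US: "S * conj_transpose S = 1\<^sub>m n"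
  and rel: "S * A ^\<^sub>m p = A * S" and ev: "eigenvalue A l"
  shows "eigenvalue A (l ^ p) \<and> l \<noteq> 0"
proof -
  from ev obtain v where v: "eigenvector A v l" unfolding eigenvalue_def by auto
  hence vc: "v \<in> carrier_vec n" and v0: "v \<noteq> 0\<^sub>v n" and Av: "A *\<^sub>v v = l \<cdot>\<^sub>v v"
    unfolding eigenvector_def using A by auto
  have Ap: "A ^\<^sub>m p *\<^sub>v v = l ^ p \<cdot>\<^sub>v v" by (rule eigenvector_pow[OF A v])
  have Apc: "A ^\<^sub>m p \<in> carrier_mat n n" using A by simp
  have "A *\<^sub>v (S *\<^sub>v v) = (A * S) *\<^sub>v v" using A S vc by simp
  also have "\<dots> = (S * A ^\<^sub>m p) *\<^sub>v v" using rel by simp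
  also have "\<dots> = S *\<^sub>v (A ^\<^sub>m p *\<^sub>v v)" using S Apc vc by simp
  also have "\<dots> = l ^ p \<cdot>\<^sub>v (S *\<^sub>v v)" unfolding Ap by (rule mult_mat_vec[OF S vc])
  finally have ASv: "A *\<^sub>v (S *\<^sub>v v) = l ^ p \<cdot>\<^sub>v (S *\<^sub>v v)" .
  have St: "conj_transpose S \<in> carrier_mat n n" using S by simp
  have USl: "conj_transpose S * S = 1\<^sub>m n" by (rule unitary_left[OF S US])
  have "S *\<^sub>v v \<noteq> 0\<^sub>v n"
  proof
    assume "S *\<^sub>v v = 0\<^sub>v n"
    hence "conj_transpose S *\<^sub>v (S *\<^sub>v v) = 0\<^sub>v n" using St by (simp add: mult_zero_vec')
    hence "(conj_transpose S * S) *\<^sub>v v = 0\<^sub>v n" using assoc_mult_mat_vec[OF St S vc] by simp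
    hence "v = 0\<^sub>v n" unfolding USl using vc by simp
    with v0 show False by simp
  qed
  hence "eigenvector A (S *\<^sub>v v) (l ^ p)" unfolding eigenvector_def using A S vc ASv by auto
  hence e1: "eigenvalue A (l ^ p)" unfolding eigenvalue_def by auto
  have At: "conj_transpose A \<in> carrier_mat n n" using A by simp
  have UAl: "conj_transpose A * A = 1\<^sub>m n" by (rule unitary_left[OF A UA])
  have "l \<noteq> 0"
  proof
    assume "l = 0"
    hence "A *\<^sub>v v = 0\<^sub>v n" using Av vc by auto
    hence "conj_transpose A *\<^sub>v (A *\<^sub>v v) = 0\<^sub>v n" using At by (simp add: mult_zero_vec')
    hence "(conj_transpose A * A) *\<^sub>v v = 0\<^sub>v n" using assoc_mult_mat_vec[OF At A vc] by simp
    hence "v = 0\<^sub>v n" unfolding UAl using vc by simp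
    with v0 show False by simp
  qed
  with e1 show ?thesis by simp
qed

lemma eig_root_unity: fixes A S :: "complex mat"
  assumes A: "A \<in> carrier_mat n n" and UA: "A * conj_transpose A = 1\<^sub>m n"
  and S: "S \<in> carrier_mat n n" and US: "S * conj_transpose S = 1\<^sub>m n"
  and rel: "S * A ^\<^sub>m p = A * S" and p: "p \<ge> 2" and ev: "eigenvalue A l"
  shows "\<exists>e>0. l ^ e = 1"
proof -
  have fin: "finite (spectrum A)" by (rule card_finite_spectrum[OF A])
  have mem: "eigenvalue A (l ^ (p ^ i))" for i
  proof (induction i)
    case 0 thus ?case using ev by simp
  next
    case (Suc i)
    from eig_step[OF A UA S US rel Suc.IH] have "eigenvalue A ((l ^ (p ^ i)) ^ p)" by simp
    thus ?case by (simp add: power_mult[symmetric] mult.commute)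
  qed
  have l0: "l \<noteq> 0" using eig_step[OF A UA S US rel ev] by simp
  have sub: "(\<lambda>i. l ^ (p ^ i)) ` UNIV \<subseteq> spectrum A" using mem unfolding spectrum_def by auto
  have "\<not> inj (\<lambda>i. l ^ (p ^ i))"
  proof
    assume "inj (\<lambda>i. l ^ (p ^ i))"
    with finite_imageD[OF finite_subset[OF sub fin]] show False by simp
  qed
  then obtain i j where ij: "i \<noteq> j" "l ^ (p ^ i) = l ^ (p ^ j)" unfolding inj_def by auto
  have "\<exists>a b. a < b \<and> l ^ (p ^ a) = l ^ (p ^ b)"
  proof (cases "i < j")
    case True thus ?thesis using ij by blast
  next
    case False hence "j < i" using ij by simp
    thus ?thesis using ij by metis
  qed
  then obtain a b where ab: "a < b" "l ^ (p ^ a) = l ^ (p ^ b)" by blast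
  have lt: "p ^ a < p ^ b" using ab(1) p by (simp add: power_strict_increasing)
  have "l ^ (p ^ b) = l ^ (p ^ a) * l ^ (p ^ b - p ^ a)"
    using lt by (simp add: power_add[symmetric])
  with ab(2) have "l ^ (p ^ a) * l ^ (p ^ b - p ^ a) = l ^ (p ^ a) * 1" by simp
  hence "l ^ (p ^ b - p ^ a) = 1" using l0 by simp
  thus ?thesis using lt by (intro exI[of _ "p ^ b - p ^ a"]) simp
qed

lemma pow_unitary: fixes A :: "complex mat"
  assumes A: "A \<in> carrier_mat n n" and UA: "A * conj_transpose A = 1\<^sub>m n"
  shows "A ^\<^sub>m k * conj_transpose (A ^\<^sub>m k) = 1\<^sub>m n"
proof (induction k)
  case 0 thus ?case using A by simp
next
  case (Suc k)
  have Ak: "A ^\<^sub>m k \<in> carrier_mat n n" using A by simp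
  have Akt: "conj_transpose (A ^\<^sub>m k) \<in> carrier_mat n n" using Ak by simp
  have At: "conj_transpose A \<in> carrier_mat n n" using A by simp
  have "A ^\<^sub>m Suc k * conj_transpose (A ^\<^sub>m Suc k) = (A ^\<^sub>m k * A) * (conj_transpose A * conj_transpose (A ^\<^sub>m k))"
    using ct_mult[OF Ak A] by simp
  also have "\<dots> = A ^\<^sub>m k * ((A * conj_transpose A) * conj_transpose (A ^\<^sub>m k))"
  proof -
    have c1: "conj_transpose A * conj_transpose (A ^\<^sub>m k) \<in> carrier_mat n n" using At Akt by simp
    have "(A ^\<^sub>m k * A) * (conj_transpose A * conj_transpose (A ^\<^sub>m k)) = A ^\<^sub>m k * (A * (conj_transpose A * conj_transpose (A ^\<^sub>m k)))"
      by (rule assoc_mult_mat[OF Ak A c1])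
    also have "A * (conj_transpose A * conj_transpose (A ^\<^sub>m k)) = (A * conj_transpose A) * conj_transpose (A ^\<^sub>m k)"
      by (rule assoc_mult_mat[OF A At Akt, symmetric])
    finally show ?thesis .
  qed
  also have "\<dots> = 1\<^sub>m n" using UA Suc.IH left_mult_one_mat[OF Akt] by simp
  finally show ?case .
qed

lemma finite_order: fixes A S :: "complex mat"
  assumes A: "A \<in> carrier_mat n n" and UA: "A * conj_transpose A = 1\<^sub>m n"
  and S: "S \<in> carrier_mat n n" and US: "S * conj_transpose S = 1\<^sub>m n"
  and rel: "S * A ^\<^sub>m p = A * S" and p: "p \<ge> 2"
  shows "\<exists>K>0. A ^\<^sub>m K = 1\<^sub>m n"
proof -
  define e where "e l = (SOME e. e > 0 \<and> l ^ e = (1::complex))" for l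
  have e: "e l > 0 \<and> l ^ e l = 1" if "eigenvalue A l" for l
    unfolding e_def by (rule someI_ex, rule eig_root_unity[OF A UA S US rel p that])
  have fin: "finite (spectrum A)" by (rule card_finite_spectrum[OF A])
  define K where "K = (\<Prod>l\<in>spectrum A. e l)"
  have K0: "K > 0" unfolding K_def using e fin by (intro prod_pos) (auto simp: spectrum_def)
  have Kl: "l ^ K = 1" if "eigenvalue A l" for l
  proof -
    have "e l dvd K" unfolding K_def using fin that by (intro dvd_prod) (auto simp: spectrum_def)
    then obtain c where "K = e l * c" by (auto elim: dvdE)
    thus ?thesis using e[OF that] by (simp add: power_mult)
  qed
  obtain es where es: "char_poly A = (\<Prod>a\<leftarrow>es. [:- a, 1:])" using char_poly_factorized[OF A] by blast
  obtain T P Q where sd: "schur_decomposition A es = (T,P,Q)" by (cases "schur_decomposition A es") auto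
  from schur_decomposition[OF A es sd]
  have wit: "similar_mat_wit A T P Q" and uT: "upper_triangular T" and dT: "diag_mat T = es" by auto
  have T: "T \<in> carrier_mat n n" using similar_mat_witD2[OF A wit] by auto
  have Tev: "eigenvalue A (T $$ (i,i))" if i: "i < n" for i
  proof -
    have "T $$ (i,i) \<in> set es" using i T unfolding dT[symmetric] diag_mat_def by auto
    hence "poly (char_poly A) (T $$ (i,i)) = 0" unfolding es
      by (induction es) (auto simp: poly_prod_list)
    thus ?thesis using eigenvalue_root_char_poly[OF A] by simp
  qed
  have TK: "T ^\<^sub>m K \<in> carrier_mat n n" using T by simp
  from ut_pow[OF T uT, of K] have uTK: "upper_triangular (T ^\<^sub>m K)"
    and dTK: "\<forall>i<n. (T ^\<^sub>m K) $$ (i,i) = 1" using Kl Tev by auto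
  define N where "N = char_matrix (T ^\<^sub>m K) 1"
  have N: "N \<in> carrier_mat n n" unfolding N_def using TK by simp
  have "N ^\<^sub>m n = 0\<^sub>m n n"
  proof (rule strict_nilp[OF N])
    fix i j assume i: "i < n" and j: "j < n" and ji: "j \<le> i"
    show "N $$ (i,j) = 0"
    proof (cases "j = i")
      case True thus ?thesis unfolding N_def char_matrix_def using dTK i TK T by simp
    next
      case False hence "j < i" using ji by simp
      thus ?thesis unfolding N_def char_matrix_def using uTK i j TK T by (auto dest: upper_triangularD)
    qed
  qed
  have wit2: "similar_mat_wit (char_matrix (A ^\<^sub>m K) 1 ^\<^sub>m n) (N ^\<^sub>m n) P Q"
    unfolding N_def by (intro similar_mat_wit_pow similar_mat_wit_char_matrix similar_mat_wit_pow wit)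
  have AK: "A ^\<^sub>m K \<in> carrier_mat n n" using A by simp
  have "char_matrix (A ^\<^sub>m K) 1 ^\<^sub>m n = 0\<^sub>m n n"
  proof -
    have c: "char_matrix (A ^\<^sub>m K) 1 ^\<^sub>m n \<in> carrier_mat n n" using AK by simp
    from similar_mat_witD2[OF c wit2] \<open>N ^\<^sub>m n = 0\<^sub>m n n\<close>
    show ?thesis by simp
  qed
  moreover have "char_matrix (A ^\<^sub>m K) 1 = A ^\<^sub>m K - 1\<^sub>m n"
    unfolding char_matrix_def using AK by (intro eq_matI) auto
  ultimately have "(A ^\<^sub>m K - 1\<^sub>m n) ^\<^sub>m n = 0\<^sub>m n n" by simp
  from unitary_unipotent[OF AK pow_unitary[OF A UA] this] K0 show ?thesis by blast
qed



definition elt :: "nat \<Rightarrow> nat \<Rightarrow> rat \<Rightarrow> rat mat" where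
  "elt a b x = mat 4 4 (\<lambda>(i,j). if i = j then 1 else if i = a \<and> j = b then x else 0)"

abbreviation "uu x \<equiv> elt 0 1 x"
abbreviation "vv x \<equiv> elt 1 3 x"
abbreviation "zz x \<equiv> elt 0 3 x"

definition ww :: "rat \<Rightarrow> rat \<Rightarrow> rat mat" where
  "ww a b = mat 4 4 (\<lambda>(i,j). if i = j then 1 else if i = 0 \<and> j = 1 then a else if i = 1 \<and> j = 3 then b else 0)"

definition DD :: "nat \<Rightarrow> rat mat" where
  "DD p = mat 4 4 (\<lambda>(i,j). if i = j then (if i = 1 then of_nat p else 1) else 0)"

lemma less4: "i < (4::nat) \<longleftrightarrow> i = 0 \<or> i = 1 \<or> i = 2 \<or> i = 3" by auto

lemma mult4: fixes f g :: "nat \<times> nat \<Rightarrow> rat"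
  shows "mat 4 4 f * mat 4 4 g = mat 4 4 (\<lambda>(i,j). f (i,0) * g (0,j) + f (i,1) * g (1,j) + f (i,2) * g (2,j) + f (i,3) * g (3,j))"
  by (rule eq_matI) (auto simp: scalar_prod_def numeral_eq_Suc sum.atLeast0_lessThan_Suc)

lemma uu_mult: "uu a * uu b = uu (a + b)"
  unfolding elt_def mult4 by (rule eq_matI) (auto simp: less4)

lemma zz_mult: "zz a * zz b = zz (a + b)"
  unfolding elt_def mult4 by (rule eq_matI) (auto simp: less4)

lemma vu_mult: "vv b * uu a = ww a b"
  unfolding elt_def ww_def mult4 by (rule eq_matI) (auto simp: less4)

lemma uv_mult: "uu a * vv b = zz (a * b) * ww a b"
  unfolding elt_def ww_def mult4 by (rule eq_matI) (auto simp: less4)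

lemma D_mult: "DD p * uu (of_nat p * a) = uu a * DD p"
  unfolding elt_def DD_def mult4 by (rule eq_matI) (auto simp: less4)

lemma Zinvp_int: "of_int a \<in> Zinvp p"
  unfolding Zinvp_def by (rule CollectI, rule exI[of _ a], rule exI[of _ 0]) simp

lemma Zinvp_div: "of_int a / of_nat p \<in> Zinvp p"
  unfolding Zinvp_def by (rule CollectI, rule exI[of _ a], rule exI[of _ 1]) simp

lemma Zinvp_0: "0 \<in> Zinvp p" using Zinvp_int[of 0 p] by simp

lemma elt_carrier: assumes "a < b" "b < 4" "x \<in> Zinvp p"
  shows "elt a b x \<in> carrier (abels_group p)"
  unfolding abels_group_def elt_def using assms Zinvp_0
  by (auto intro!: exI[of _ 0])

lemma ww_carrier: assumes "a \<in> Zinvp p" "b \<in> Zinvp p"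
  shows "ww a b \<in> carrier (abels_group p)"
  unfolding abels_group_def ww_def using assms Zinvp_0
  by (auto intro!: exI[of _ 0])

lemma DD_carrier: "DD p \<in> carrier (abels_group p)"
proof -
  have e: "\<exists>k n :: int. (1::rat) = 1 \<and> (of_nat p :: rat) = of_nat p powi k \<and> (1::rat) = of_nat p powi n \<and> (1::rat) = 1"
    by (rule exI[of _ 1], rule exI[of _ 0]) simp
  show ?thesis
    unfolding abels_group_def DD_def using Zinvp_0 e by auto
qed

lemma abels_carrier_mat: "g \<in> carrier (abels_group p) \<Longrightarrow> g \<in> carrier_mat 4 4"
  unfolding abels_group_def by auto

lemma abels_mult: "g \<otimes>\<^bsub>abels_group p\<^esub> h = g * h"
  unfolding abels_group_def by simp

lemma N_form: "1\<^sub>m 4 + mat 4 4 (\<lambda>(i,j). if (i,j) = (0,3) then c else 0) = zz c"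
  unfolding elt_def by (rule eq_matI) auto

lemma abels_N_zz: "h \<in> abels_N \<Longrightarrow> \<exists>m::int. h = zz (of_int m)"
  unfolding abels_N_def N_form by auto

lemma zz_N: "zz (of_int m) \<in> abels_N"
  unfolding abels_N_def N_form by auto



lemma amalg_append_right: "amalg_eq G H u v \<Longrightarrow> amalg_eq G H (u @ w) (v @ w)"
proof (induction rule: amalg_eq.induct)
  case (refl w') thus ?case by (rule amalg_eq.refl)
next
  case (sym v' w') thus ?case by (blast intro: amalg_eq.sym)
next
  case (trans u' v' w') thus ?case by (blast intro: amalg_eq.trans)
next
  case (merge x y u b v) thus ?case using amalg_eq.merge[of x G y H u b "v @ w"] by simp
next
  case (unit u b v) thus ?case using amalg_eq.unit[of G H u b "v @ w"] by simp
next
  case (ident h u v) thus ?case using amalg_eq.ident[of h H G u "v @ w"] by simp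
qed

lemma amalg_append_left: "amalg_eq G H u v \<Longrightarrow> amalg_eq G H (w @ u) (w @ v)"
proof (induction rule: amalg_eq.induct)
  case (refl w') thus ?case by (rule amalg_eq.refl)
next
  case (sym v' w') thus ?case by (blast intro: amalg_eq.sym)
next
  case (trans u' v' w') thus ?case by (blast intro: amalg_eq.trans)
next
  case (merge x y u b v) thus ?case using amalg_eq.merge[of x G y H "w @ u" b v] by simp
next
  case (unit u b v) thus ?case using amalg_eq.unit[of G H "w @ u" b v] by simp
next
  case (ident h u v) thus ?case using amalg_eq.ident[of h H G "w @ u" v] by simp
qed

lemma class_self: "w \<in> amalg_words G \<Longrightarrow> w \<in> amalg_class G H w"
  unfolding amalg_class_def by (auto intro: amalg_eq.refl)

lemma class_eq: "amalg_eq G H w w' \<Longrightarrow> amalg_class G H w = amalg_class G H w'"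
  unfolding amalg_class_def by (auto intro: amalg_eq.trans amalg_eq.sym)

lemma class_eqD: "w' \<in> amalg_words G \<Longrightarrow> amalg_class G H w = amalg_class G H w' \<Longrightarrow> amalg_eq G H w w'"
  using class_self[of w' G H] unfolding amalg_class_def by auto

lemma mult_class: assumes "x \<in> amalg_words G" "y \<in> amalg_words G"
  shows "amalg_class G H x \<otimes>\<^bsub>amalg_product G H\<^esub> amalg_class G H y = amalg_class G H (x @ y)"
proof -
  let ?x = "SOME x'. x' \<in> amalg_class G H x" and ?y = "SOME y'. y' \<in> amalg_class G H y"
  have "?x \<in> amalg_class G H x" by (rule someI, rule class_self[OF assms(1)])
  hence ex: "amalg_eq G H x ?x" unfolding amalg_class_def by auto
  have "?y \<in> amalg_class G H y" by (rule someI, rule class_self[OF assms(2)])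
  hence ey: "amalg_eq G H y ?y" unfolding amalg_class_def by auto
  have "amalg_eq G H (x @ y) (?x @ y)" by (rule amalg_append_right[OF ex])
  moreover have "amalg_eq G H (?x @ y) (?x @ ?y)" by (rule amalg_append_left[OF ey])
  ultimately have "amalg_eq G H (x @ y) (?x @ ?y)" by (rule amalg_eq.trans)
  hence "amalg_class G H (?x @ ?y) = amalg_class G H (x @ y)" by (intro class_eq[symmetric])
  thus ?thesis unfolding amalg_product_def by simp
qed

lemma single_word: "g \<in> carrier G \<Longrightarrow> [(b, g)] \<in> amalg_words G"
  unfolding amalg_words_def by simp

lemma single_carrier: "g \<in> carrier G \<Longrightarrow> amalg_class G H [(b, g)] \<in> carrier (amalg_product G H)"
  unfolding amalg_product_def using single_word[of g G b] by (auto intro: imageI)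

lemma class_merge: assumes "x \<in> carrier G" "y \<in> carrier G"
  shows "amalg_class G H [(b, x)] \<otimes>\<^bsub>amalg_product G H\<^esub> amalg_class G H [(b, y)] = amalg_class G H [(b, x \<otimes>\<^bsub>G\<^esub> y)]"
proof -
  have "amalg_class G H [(b, x)] \<otimes>\<^bsub>amalg_product G H\<^esub> amalg_class G H [(b, y)] = amalg_class G H ([(b, x)] @ [(b, y)])"
    by (rule mult_class[OF single_word[OF assms(1)] single_word[OF assms(2)]])
  also have "\<dots> = amalg_class G H [(b, x \<otimes>\<^bsub>G\<^esub> y)]"
    using class_eq[OF amalg_eq.merge[OF assms, of H "[]" b "[]"]] by simp
  finally show ?thesis .
qed

lemma class_ident: "h \<in> H \<Longrightarrow> amalg_class G H [(False, h)] = amalg_class G H [(True, h)]"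
  using class_eq[OF amalg_eq.ident[of h H G "[]" "[]"]] by simp



definition tau :: "nat \<Rightarrow> rat \<Rightarrow> rat" where
  "tau p x = (if x \<in> \<int> then x + 1 / of_nat p else if x - 1 / of_nat p \<in> \<int> then x - 1 / of_nat p else x)"

definition sig :: "nat \<Rightarrow> rat mat \<Rightarrow> rat mat" where
  "sig p A = mat (dim_row A) (dim_col A) (\<lambda>(i,j). if i = 0 \<and> j = 3 \<and> A $$ (3,3) = 1 then tau p (A $$ (0,3)) else A $$ (i,j))"

definition act :: "nat \<Rightarrow> bool \<Rightarrow> rat mat \<Rightarrow> rat mat \<Rightarrow> rat mat" where
  "act p b g A = (if g \<in> carrier_mat 4 4 \<and> A \<in> carrier_mat 4 4 then (if b then sig p (g * sig p A) else g * A) else A)"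

definition ev :: "nat \<Rightarrow> (bool \<times> rat mat) list \<Rightarrow> rat mat \<Rightarrow> rat mat" where
  "ev p w A = foldr (\<lambda>l B. act p (fst l) (snd l) B) w A"

lemma not_int: "0 < x \<Longrightarrow> x < 1 \<Longrightarrow> (x::rat) \<notin> \<int>"
  by (auto elim!: Ints_cases)

lemma inv_p_not_int: "p \<ge> 2 \<Longrightarrow> 1 / of_nat p \<notin> (\<int> :: rat set)"
  by (rule not_int) auto

lemma tau_tau: assumes "p \<ge> 2" shows "tau p (tau p x) = x"
proof -
  have np: "1 / of_nat p \<notin> (\<int> :: rat set)" using inv_p_not_int[OF assms] .
  show ?thesis
  proof (cases "x \<in> \<int>")
    case True
    have "x + 1 / of_nat p \<notin> \<int>"
    proof
      assume "x + 1 / of_nat p \<in> \<int>"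
      hence "(x + 1 / of_nat p) - x \<in> \<int>" using True by (intro Ints_diff)
      thus False using np by simp
    qed
    thus ?thesis using True unfolding tau_def by simp
  next
    case False
    thus ?thesis unfolding tau_def by auto
  qed
qed

lemma tau_shift: "tau p (x + of_int m) = tau p x + of_int m"
proof -
  have a: "x + of_int m \<in> \<int> \<longleftrightarrow> x \<in> \<int>"
    by (metis Ints_add Ints_diff Ints_of_int add_diff_cancel_right')
  have b: "x + of_int m - 1 / of_nat p \<in> \<int> \<longleftrightarrow> x - 1 / of_nat p \<in> \<int>"
    by (metis Ints_add Ints_diff Ints_of_int add_diff_cancel_right' diff_add_eq)
  show ?thesis unfolding tau_def a b by simp
qed

lemma sig_carrier[simp]: "A \<in> carrier_mat 4 4 \<Longrightarrow> sig p A \<in> carrier_mat 4 4"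
  unfolding sig_def by auto

lemma sig_sig: assumes "p \<ge> 2" "A \<in> carrier_mat 4 4" shows "sig p (sig p A) = A"
  by (rule eq_matI) (use assms in \<open>auto simp: sig_def tau_tau\<close>)

lemma zz_mult_mat: "zz c * mat 4 4 f = mat 4 4 (\<lambda>(i,j). if i = 0 then f (0,j) + c * f (3,j) else f (i,j))"
  unfolding elt_def mult4 by (rule eq_matI) (auto simp: less4)

lemma zz_mult_left: assumes "B \<in> carrier_mat 4 4"
  shows "zz c * B = mat 4 4 (\<lambda>(i,j). if i = 0 then B $$ (0,j) + c * B $$ (3,j) else B $$ (i,j))"
proof -
  have B: "B = mat 4 4 (\<lambda>(i,j). B $$ (i,j))" by (rule eq_matI) (use assms in auto)
  have "zz c * B = zz c * mat 4 4 (\<lambda>(i,j). B $$ (i,j))" using B by simp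
  also have "\<dots> = mat 4 4 (\<lambda>(i,j). if i = 0 then B $$ (0,j) + c * B $$ (3,j) else B $$ (i,j))"
    unfolding zz_mult_mat by (rule eq_matI) auto
  finally show ?thesis .
qed

lemma sig_N: assumes "B \<in> carrier_mat 4 4" and p: "p \<ge> 2"
  shows "sig p (zz (of_int m) * sig p B) = zz (of_int m) * B"
proof -
  have sB: "sig p B \<in> carrier_mat 4 4" using assms(1) by simp
  show ?thesis
    unfolding zz_mult_left[OF assms(1)] zz_mult_left[OF sB]
    by (rule eq_matI) (use assms in \<open>auto simp: sig_def tau_shift tau_tau[OF p]\<close>)
qed

lemma act_merge: assumes p: "p \<ge> 2" and x: "x \<in> carrier_mat 4 4" and y: "y \<in> carrier_mat 4 4"
  shows "act p b x (act p b y B) = act p b (x * y) B"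
proof (cases "B \<in> carrier_mat 4 4")
  case True
  have sB: "sig p B \<in> carrier_mat 4 4" using True by simp
  have ySB: "y * sig p B \<in> carrier_mat 4 4" using y sB by simp
  show ?thesis
  proof (cases b)
    case True
    thus ?thesis using \<open>B \<in> carrier_mat 4 4\<close> x y sB ySB unfolding act_def
      by (simp add: sig_sig[OF p ySB] assoc_mult_mat[OF x y sB])
  next
    case False
    thus ?thesis using \<open>B \<in> carrier_mat 4 4\<close> x y unfolding act_def
      by (simp add: assoc_mult_mat[OF x y \<open>B \<in> carrier_mat 4 4\<close>])
  qed
next
  case False thus ?thesis using x y unfolding act_def by simp
qed

lemma act_unit: assumes p: "p \<ge> 2" shows "act p b (1\<^sub>m 4) B = B"
  unfolding act_def using sig_sig[OF p, of B] left_mult_one_mat[OF sig_carrier, of B p] by auto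

lemma act_ident: assumes p: "p \<ge> 2" and h: "h \<in> abels_N" shows "act p False h B = act p True h B"
proof -
  obtain m where m: "h = zz (of_int m)" using abels_N_zz[OF h] by blast
  have hc: "h \<in> carrier_mat 4 4" unfolding m elt_def by simp
  show ?thesis unfolding act_def using hc sig_N[OF _ p, of B m] unfolding m by auto
qed

lemma ev_append: "ev p (u @ v) B = ev p u (ev p v B)"
  unfolding ev_def by simp

lemma ev_invariant: assumes p: "p \<ge> 2"
  shows "amalg_eq (abels_group p) abels_N w1 w2 \<Longrightarrow> ev p w1 = ev p w2"
proof (induction rule: amalg_eq.induct)
  case (merge x y u b v)
  have xc: "x \<in> carrier_mat 4 4" "y \<in> carrier_mat 4 4" using merge abels_carrier_mat by auto
  show ?case
    by (rule ext) (simp add: ev_append ev_def act_merge[OF p xc] abels_mult)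
next
  case (unit u b v)
  show ?case
    by (rule ext) (simp add: ev_append ev_def act_unit[OF p] abels_group_def)
next
  case (ident h u v)
  show ?case
    by (rule ext) (simp add: ev_append ev_def act_ident[OF p ident])
qed auto

lemma tau_2p: assumes p: "p \<ge> 2" shows "tau p (2 / of_nat p) \<noteq> 1 / of_nat p"
proof (cases "p = 2")
  case True thus ?thesis unfolding tau_def by simp
next
  case False
  hence p3: "p \<ge> 3" using p by simp
  have a: "2 / of_nat p \<notin> (\<int> :: rat set)" using p3 by (intro not_int) auto
  have "2 / of_nat p - 1 / of_nat p = (1 / of_nat p :: rat)" by (simp add: diff_divide_distrib)
  hence b: "2 / of_nat p - 1 / of_nat p \<notin> (\<int> :: rat set)" using inv_p_not_int[OF p] by simp
  have "tau p (2 / of_nat p) = 2 / of_nat p" unfolding tau_def using a b by simp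
  thus ?thesis using p by (simp add: divide_simps)
qed

lemma zz_inv_p_carrier: "zz (1 / of_nat p) \<in> carrier (abels_group p)"
  using elt_carrier[of 0 3 "1 / of_nat p" p] Zinvp_div[of 1 p] by simp

lemma distinct_classes: assumes p: "p \<ge> 2"
  shows "amalg_class (abels_group p) abels_N [(False, zz (1 / of_nat p))]
       \<noteq> amalg_class (abels_group p) abels_N [(True, zz (1 / of_nat p))]"
proof
  let ?g = "zz (1 / of_nat p)"
  assume eq: "amalg_class (abels_group p) abels_N [(False, ?g)] = amalg_class (abels_group p) abels_N [(True, ?g)]"
  have "amalg_eq (abels_group p) abels_N [(False, ?g)] [(True, ?g)]"
    by (rule class_eqD[OF single_word[OF zz_inv_p_carrier] eq])
  from ev_invariant[OF p this] have "ev p [(False, ?g)] (1\<^sub>m 4) = ev p [(True, ?g)] (1\<^sub>m 4)" by simp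
  moreover have gc: "?g \<in> carrier_mat 4 4" unfolding elt_def by simp
  moreover have s1: "sig p (1\<^sub>m 4) = ?g"
    by (rule eq_matI) (auto simp: sig_def elt_def tau_def)
  moreover have "?g * ?g = zz (2 / of_nat p)" unfolding zz_mult by simp
  ultimately have "?g = sig p (zz (2 / of_nat p))"
    unfolding ev_def act_def by simp
  hence "?g $$ (0,3) = sig p (zz (2 / of_nat p)) $$ (0,3)" by simp
  hence "1 / of_nat p = tau p (2 / of_nat p)" by (simp add: sig_def elt_def)
  thus False using tau_2p[OF p] by simp
qed



lemma unitary_cancel: fixes X S :: "complex mat"
  assumes X: "X \<in> carrier_mat n n" and S: "S \<in> carrier_mat n n" and US: "S * conj_transpose S = 1\<^sub>m n"
  and eq: "X * S = S"
  shows "X = 1\<^sub>m n"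
proof -
  have St: "conj_transpose S \<in> carrier_mat n n" using S by simp
  have "X = X * (S * conj_transpose S)" using US X by simp
  also have "\<dots> = (X * S) * conj_transpose S" by (rule assoc_mult_mat[OF X S St, symmetric])
  also have "\<dots> = 1\<^sub>m n" using eq US by simp
  finally show ?thesis .
qed

definition rho :: "nat \<Rightarrow> ((bool \<times> rat mat) list set \<Rightarrow> complex mat) \<Rightarrow> bool \<Rightarrow> rat mat \<Rightarrow> complex mat" where
  "rho p \<psi> b g = \<psi> (amalg_class (abels_group p) abels_N [(b, g)])"

lemma rho_carrier: assumes hom: "\<psi> \<in> hom (amalg_product (abels_group p) abels_N) (unitary_group n)"
  and g: "g \<in> carrier (abels_group p)"
  shows "rho p \<psi> b g \<in> carrier_mat n n" "rho p \<psi> b g * conj_transpose (rho p \<psi> b g) = 1\<^sub>m n"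
proof -
  have "rho p \<psi> b g \<in> carrier (unitary_group n)"
    unfolding rho_def by (rule hom_in_carrier[OF hom single_carrier[OF g]])
  thus "rho p \<psi> b g \<in> carrier_mat n n" "rho p \<psi> b g * conj_transpose (rho p \<psi> b g) = 1\<^sub>m n"
    unfolding unitary_group_def by auto
qed

lemma rho_mult: assumes hom: "\<psi> \<in> hom (amalg_product (abels_group p) abels_N) (unitary_group n)"
  and x: "x \<in> carrier (abels_group p)" and y: "y \<in> carrier (abels_group p)"
  shows "rho p \<psi> b (x * y) = rho p \<psi> b x * rho p \<psi> b y"
proof -
  have "rho p \<psi> b (x * y) = \<psi> (amalg_class (abels_group p) abels_N [(b, x)] \<otimes>\<^bsub>amalg_product (abels_group p) abels_N\<^esub> amalg_class (abels_group p) abels_N [(b, y)])"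
    unfolding rho_def class_merge[OF x y] abels_mult ..
  also have "\<dots> = rho p \<psi> b x * rho p \<psi> b y"
    unfolding rho_def using hom_mult[OF hom single_carrier[OF x] single_carrier[OF y]]
    by (simp add: unitary_group_def)
  finally show ?thesis .
qed

lemma uu0: "uu 0 = 1\<^sub>m 4" unfolding elt_def by (rule eq_matI) auto

lemma uu_nat_carrier: "uu (of_nat k) \<in> carrier (abels_group p)"
  using elt_carrier[of 0 1 "of_nat k" p] Zinvp_int[of "int k" p] by simp

lemma rho_one: assumes hom: "\<psi> \<in> hom (amalg_product (abels_group p) abels_N) (unitary_group n)"
  shows "rho p \<psi> b (1\<^sub>m 4) = 1\<^sub>m n"
proof -
  have c: "1\<^sub>m 4 \<in> carrier (abels_group p)" using uu_nat_carrier[of 0 p] uu0 by simp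
  have "rho p \<psi> b (1\<^sub>m 4 * 1\<^sub>m 4) = rho p \<psi> b (1\<^sub>m 4) * rho p \<psi> b (1\<^sub>m 4)"
    by (rule rho_mult[OF hom c c])
  hence "rho p \<psi> b (1\<^sub>m 4) * rho p \<psi> b (1\<^sub>m 4) = rho p \<psi> b (1\<^sub>m 4)" by simp
  thus ?thesis using unitary_cancel rho_carrier[OF hom c] by blast
qed

lemma rho_uu_pow: assumes hom: "\<psi> \<in> hom (amalg_product (abels_group p) abels_N) (unitary_group n)"
  shows "rho p \<psi> b (uu (of_nat k)) = rho p \<psi> b (uu 1) ^\<^sub>m k"
proof (induction k)
  case 0
  have "rho p \<psi> b (uu 1) \<in> carrier_mat n n" using rho_carrier(1)[OF hom uu_nat_carrier[of 1 p], of b] by simp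
  hence "dim_row (rho p \<psi> b (uu 1)) = n" by simp
  thus ?case using rho_one[OF hom] uu0 by simp
next
  case (Suc k)
  have "uu (of_nat (Suc k)) = uu (of_nat k) * uu 1" unfolding uu_mult by (simp add: add.commute)
  hence "rho p \<psi> b (uu (of_nat (Suc k))) = rho p \<psi> b (uu (of_nat k)) * rho p \<psi> b (uu 1)"
    using rho_mult[OF hom uu_nat_carrier uu_nat_carrier[of 1]] by simp
  thus ?case using Suc.IH by simp
qed

lemma copy_lemma: assumes hom: "\<psi> \<in> hom (amalg_product (abels_group p) abels_N) (unitary_group n)"
  and p: "prime p"
  shows "\<exists>M>0. coprime M p \<and> rho p \<psi> b (zz (of_nat M / of_nat p)) = 1\<^sub>m n"
proof -
  have p2: "p \<ge> 2" using p by (simp add: prime_ge_2_nat)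
  define A where "A = rho p \<psi> b (uu 1)"
  define S where "S = rho p \<psi> b (DD p)"
  have u1: "uu 1 \<in> carrier (abels_group p)" using uu_nat_carrier[of 1 p] by simp
  have A: "A \<in> carrier_mat n n" "A * conj_transpose A = 1\<^sub>m n"
    unfolding A_def using rho_carrier[OF hom u1] by auto
  have S: "S \<in> carrier_mat n n" "S * conj_transpose S = 1\<^sub>m n"
    unfolding S_def using rho_carrier[OF hom DD_carrier] by auto
  have Drel: "S * rho p \<psi> b (uu (of_nat p * a)) = rho p \<psi> b (uu a) * S"
    if a: "uu a \<in> carrier (abels_group p)" "uu (of_nat p * a) \<in> carrier (abels_group p)" for a
  proof -
    have "rho p \<psi> b (DD p * uu (of_nat p * a)) = rho p \<psi> b (uu a * DD p)" by (simp only: D_mult)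
    thus ?thesis unfolding S_def using rho_mult[OF hom DD_carrier a(2)] rho_mult[OF hom a(1) DD_carrier] by simp
  qed
  have "S * A ^\<^sub>m p = A * S"
    using Drel[of 1] u1 uu_nat_carrier[of p p] rho_uu_pow[OF hom, of b p] unfolding A_def by simp
  from finite_order[OF A S this p2] obtain K where K: "K > 0" "A ^\<^sub>m K = 1\<^sub>m n" by blast
  hence ex: "\<exists>M. M > 0 \<and> rho p \<psi> b (uu (of_nat M)) = 1\<^sub>m n"
    using rho_uu_pow[OF hom, of b K] unfolding A_def by auto
  define M where "M = (LEAST M. M > 0 \<and> rho p \<psi> b (uu (of_nat M)) = 1\<^sub>m n)"
  have M: "M > 0" "rho p \<psi> b (uu (of_nat M)) = 1\<^sub>m n"
    using LeastI_ex[OF ex] unfolding M_def by auto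
  have npM: "\<not> p dvd M"
  proof
    assume "p dvd M"
    then obtain M' where M': "M = p * M'" by (auto elim: dvdE)
    hence M'0: "M' > 0" using M(1) by (cases M') auto
    have c1: "uu (of_nat M') \<in> carrier (abels_group p)" by (rule uu_nat_carrier)
    have c2: "uu (of_nat p * of_nat M') \<in> carrier (abels_group p)" using uu_nat_carrier[of "p * M'" p] by simp
    have "S * rho p \<psi> b (uu (of_nat p * of_nat M')) = rho p \<psi> b (uu (of_nat M')) * S"
      by (rule Drel[OF c1 c2])
    moreover have "rho p \<psi> b (uu (of_nat p * of_nat M')) = 1\<^sub>m n" using M(2) M' by simp
    ultimately have "rho p \<psi> b (uu (of_nat M')) * S = S" using S by simp
    hence "rho p \<psi> b (uu (of_nat M')) = 1\<^sub>m n"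
      using unitary_cancel[OF rho_carrier(1)[OF hom c1] S] by simp
    hence "M \<le> M'" unfolding M_def using M'0 by (intro Least_le) simp
    thus False using M' M'0 p2 mult_le_mono1[of 2 p M'] by linarith
  qed
  have cop: "coprime M p"
    using prime_imp_coprime[OF p npM] by (simp add: coprime_commute)
  define a where "a = (of_nat M :: rat)"
  define c where "c = (1 / of_nat p :: rat)"
  have ua: "uu a \<in> carrier (abels_group p)" unfolding a_def by (rule uu_nat_carrier)
  have vc: "vv c \<in> carrier (abels_group p)" unfolding c_def
    using elt_carrier[of 1 3 "1 / of_nat p" p] Zinvp_div[of 1 p] by simp
  have zc: "zz (a * c) \<in> carrier (abels_group p)" unfolding a_def c_def
    using elt_carrier[of 0 3 "of_int (int M) / of_nat p" p] Zinvp_div[of "int M" p] by simp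
  have wc: "ww a c \<in> carrier (abels_group p)" unfolding a_def c_def
    using ww_carrier[OF Zinvp_int[of "int M" p] Zinvp_div[of 1 p]] by simp
  have e1: "rho p \<psi> b (uu a * vv c) = rho p \<psi> b (zz (a * c) * ww a c)" by (simp only: uv_mult)
  have e2: "rho p \<psi> b (ww a c) = rho p \<psi> b (vv c) * rho p \<psi> b (uu a)"
    using rho_mult[OF hom vc ua] by (simp only: vu_mult)
  have "rho p \<psi> b (uu a) * rho p \<psi> b (vv c) = rho p \<psi> b (zz (a * c)) * (rho p \<psi> b (vv c) * rho p \<psi> b (uu a))"
    using e1 e2 rho_mult[OF hom ua vc] rho_mult[OF hom zc wc] by simp
  moreover have "rho p \<psi> b (uu a) = 1\<^sub>m n" using M(2) unfolding a_def .
  ultimately have "rho p \<psi> b (zz (a * c)) * rho p \<psi> b (vv c) = rho p \<psi> b (vv c)"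
    using left_mult_one_mat[OF rho_carrier(1)[OF hom vc, of b]] right_mult_one_mat[OF rho_carrier(1)[OF hom vc, of b]]
    by simp
  hence "rho p \<psi> b (zz (a * c)) = 1\<^sub>m n"
    using unitary_cancel[OF rho_carrier(1)[OF hom zc] rho_carrier[OF hom vc]] by simp
  moreover have "a * c = of_nat M / of_nat p" unfolding a_def c_def by simp
  ultimately show ?thesis using M(1) cop by auto
qed

lemma zz_div_carrier: "zz (of_int a / of_nat p) \<in> carrier (abels_group p)"
  using elt_carrier[of 0 3 "of_int a / of_nat p" p] Zinvp_div[of a p] by simp

lemma zz_iter: assumes hom: "\<psi> \<in> hom (amalg_product (abels_group p) abels_N) (unitary_group n)"
  and M: "rho p \<psi> b (zz (of_nat M / of_nat p)) = 1\<^sub>m n"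
  shows "rho p \<psi> b (zz (of_int (a + int (j * M)) / of_nat p)) = rho p \<psi> b (zz (of_int a / of_nat p))"
proof (induction j)
  case 0 thus ?case by simp
next
  case (Suc j)
  have Mc: "zz (of_nat M / of_nat p) \<in> carrier (abels_group p)" using zz_div_carrier[of "int M" p] by simp
  have Xc: "zz (of_int (a + int (j * M)) / of_nat p) \<in> carrier (abels_group p)" by (rule zz_div_carrier)
  have e: "zz (of_int (a + int (Suc j * M)) / of_nat p) = zz (of_int (a + int (j * M)) / of_nat p) * zz (of_nat M / of_nat p)"
    unfolding zz_mult by (simp add: add_divide_distrib algebra_simps)
  have "rho p \<psi> b (zz (of_int (a + int (Suc j * M)) / of_nat p)) = rho p \<psi> b (zz (of_int (a + int (j * M)) / of_nat p)) * rho p \<psi> b (zz (of_nat M / of_nat p))"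
    unfolding e by (rule rho_mult[OF hom Xc Mc])
  also have "\<dots> = rho p \<psi> b (zz (of_int (a + int (j * M)) / of_nat p)) * 1\<^sub>m n" unfolding M ..
  also have "\<dots> = rho p \<psi> b (zz (of_int (a + int (j * M)) / of_nat p))"
    by (rule right_mult_one_mat[OF rho_carrier(1)[OF hom Xc]])
  finally show ?case using Suc.IH by simp
qed

lemma zz0: "zz 0 = 1\<^sub>m 4" unfolding elt_def by (rule eq_matI) auto

lemma common_M: assumes hom: "\<psi> \<in> hom (amalg_product (abels_group p) abels_N) (unitary_group n)"
  and M: "rho p \<psi> b (zz (of_nat M / of_nat p)) = 1\<^sub>m n"
  shows "rho p \<psi> b (zz (of_nat (k * M) / of_nat p)) = 1\<^sub>m n"
  using zz_iter[OF hom M, of 0 k] rho_one[OF hom] zz0 by simp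

theorem proposition8p3:
  fixes p :: nat
  assumes "prime p"
  shows "\<not> MAP (amalg_product (abels_group p) abels_N)"
proof -
  have p2: "p \<ge> 2" using assms by (simp add: prime_ge_2_nat)
  let ?G = "amalg_product (abels_group p) abels_N"
  let ?g = "amalg_class (abels_group p) abels_N [(False, zz (1 / of_nat p))]"
  let ?h = "amalg_class (abels_group p) abels_N [(True, zz (1 / of_nat p))]"
  have gc: "?g \<in> carrier ?G" "?h \<in> carrier ?G" using single_carrier[OF zz_inv_p_carrier] by auto
  have ne: "?g \<noteq> ?h" by (rule distinct_classes[OF p2])
  have same: "\<psi> ?g = \<psi> ?h" if hom: "\<psi> \<in> hom ?G (unitary_group n)" for n \<psi>
  proof -
    obtain M1 where M1: "M1 > 0" "coprime M1 p" "rho p \<psi> False (zz (of_nat M1 / of_nat p)) = 1\<^sub>m n"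
      using copy_lemma[OF hom assms, of False] by blast
    obtain M2 where M2: "M2 > 0" "coprime M2 p" "rho p \<psi> True (zz (of_nat M2 / of_nat p)) = 1\<^sub>m n"
      using copy_lemma[OF hom assms, of True] by blast
    define M where "M = M2 * M1"
    have F: "rho p \<psi> False (zz (of_nat M / of_nat p)) = 1\<^sub>m n"
      unfolding M_def by (rule common_M[OF hom M1(3)])
    have T: "rho p \<psi> True (zz (of_nat M / of_nat p)) = 1\<^sub>m n"
      unfolding M_def using common_M[OF hom M2(3), of M1] by (simp add: mult.commute)
    have cop: "coprime M p" unfolding M_def using M1(2) M2(2) by simp
    obtain x where x: "[M * x = 1] (mod p)" using cong_solve_coprime_nat[OF cop] by auto
    define j where "j = x * (p - 1)"
    have "[M * x * (p - 1) + 1 = 1 * (p - 1) + 1] (mod p)"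
      using x by (intro cong_add cong_mult) auto
    hence "[1 + j * M = 0] (mod p)" unfolding j_def using p2 by (simp add: algebra_simps cong_def)
    hence "p dvd (1 + j * M)" by (simp add: cong_0_iff)
    then obtain c where c: "1 + j * M = p * c" by (auto elim: dvdE)
    have eqc: "(of_int (1 + int (j * M)) / of_nat p :: rat) = of_int (int c)"
    proof -
      have "(of_int (1 + int (j * M)) :: rat) = of_nat (1 + j * M)" by simp
      also have "\<dots> = of_nat p * of_nat c" unfolding c by simp
      finally show ?thesis using p2 by simp
    qed
    have "rho p \<psi> False (zz (of_int 1 / of_nat p)) = rho p \<psi> False (zz (of_int (int c)))"
      using zz_iter[OF hom F, of 1 j] eqc by simp
    also have "\<dots> = rho p \<psi> True (zz (of_int (int c)))"
      unfolding rho_def using class_ident[OF zz_N[of "int c"], of "abels_group p"] by simp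
    also have "\<dots> = rho p \<psi> True (zz (of_int 1 / of_nat p))"
      using zz_iter[OF hom T, of 1 j] eqc by simp
    finally show ?thesis unfolding rho_def by simp
  qed
  show ?thesis unfolding MAP_def using gc ne same by blast
qed

end
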